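(* Let $(M_1,M_2)$ be a state of a duplex network. Every shortest CLAP admits a choice of witness alternating paths that are pairwise edge-disjoint within each layer; consequently, the batched symmetric-difference operation (replacing each $M_\ell$ by $M_\ell\triangle\bigcup E(p)$, the union over the witness paths $p$ of the layer-$\ell$ segments) is well-defined.
   Context: A duplex network consists of directed graphs $G_1=(V,E_1)$, $G_2=(V,E_2)$ on a common finite node set $V$. For $\ell\in\{1,2\}$, $\mathcal B_\ell$ is the bipartite graph with vertex classes $V^+=\{v^+\}$, $V^-=\{v^-\}$ and an edge $\{u^+,v^-\}$ for each $(u,v)\in E_\ell$. A state is a pair of matchings $M_\ell$ in $\mathcal B_\ell$; $D_\ell=\{v\in V: v^-\text{ uncovered by }M_\ell\}$, $\mathrm{DD}_1=D_1\setminus D_2$, $\mathrm{DD}_2=D_2\setminus D_1$. An admissible segment $(u\xrightarrow{\ell}v)$ requires an $M_\ell$-alternating path (simple path in $\mathcal B_\ell$ alternating between $M_\ell$ and non-$M_\ell$ edges) between $u^-$ and $v^-$, called a witness path, and: for $\ell=1$, $u\in D_1$, $v\notin D_1$; for $\ell=2$, $u\notin D_2$, $v\in D_2$. A CLAP is a sequence of admissible segments $v_0\xrightarrow{\ell_1}v_1\cdots\xrightarrow{\ell_k}v_k$ with $v_0\in\mathrm{DD}_1$, $v_k\in\mathrm{DD}_2$, $\ell_{i+1}\ne\ell_i$ for all $i$, and $v_0,\dots,v_k$ pairwise distinct; a shortest CLAP is one with the minimum number $k$ of segments. *)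

theory Defs
  imports Main
begin

text \<open>Vertices of the bipartite graph B_l: v^+ is Plus v, v^- is Minus v.
  The bipartite edge {u^+, v^-} is encoded by the pair (u,v), i.e. by the
  directed edge (u,v) of the layer graph it comes from.\<close>

datatype 'v side = Plus 'v | Minus 'v

definition badj :: "('v \<times> 'v) set \<Rightarrow> 'v side \<Rightarrow> 'v side \<Rightarrow> bool" where
  "badj E x y \<longleftrightarrow> (\<exists>a b. ((x = Plus a \<and> y = Minus b) \<or> (x = Minus b \<and> y = Plus a)) \<and> (a, b) \<in> E)"

fun bedge :: "'v side \<Rightarrow> 'v side \<Rightarrow> 'v \<times> 'v" where
  "bedge (Plus a) (Minus b) = (a, b)"
| "bedge (Minus b) (Plus a) = (a, b)"
| "bedge _ _ = undefined"

definition path_edges :: "'v side list \<Rightarrow> ('v \<times> 'v) list" where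
  "path_edges p = map (\<lambda>(x, y). bedge x y) (zip p (tl p))"

definition is_matching :: "('v \<times> 'v) set \<Rightarrow> ('v \<times> 'v) set \<Rightarrow> bool" where
  "is_matching E M \<longleftrightarrow> M \<subseteq> E
     \<and> (\<forall>a b b'. (a, b) \<in> M \<longrightarrow> (a, b') \<in> M \<longrightarrow> b = b')
     \<and> (\<forall>a a' b. (a, b) \<in> M \<longrightarrow> (a', b) \<in> M \<longrightarrow> a = a')"

definition alt_path :: "('v \<times> 'v) set \<Rightarrow> ('v \<times> 'v) set \<Rightarrow> 'v side list \<Rightarrow> 'v side \<Rightarrow> 'v side \<Rightarrow> bool" where
  "alt_path E M p x y \<longleftrightarrow> p \<noteq> [] \<and> hd p = x \<and> last p = y \<and> distinct p
     \<and> (\<forall>i. Suc i < length p \<longrightarrow> badj E (p ! i) (p ! Suc i))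
     \<and> (\<forall>i. Suc i < length (path_edges p) \<longrightarrow>
            ((path_edges p ! i \<in> M) \<noteq> (path_edges p ! Suc i \<in> M)))"

text \<open>Nodes v with v^- uncovered by M.\<close>
definition Dset :: "'v set \<Rightarrow> ('v \<times> 'v) set \<Rightarrow> 'v set" where
  "Dset V M = {v \<in> V. \<forall>u. (u, v) \<notin> M}"

definition lay :: "nat \<Rightarrow> 'a \<Rightarrow> 'a \<Rightarrow> 'a" where
  "lay l x1 x2 = (if l = 1 then x1 else x2)"

definition admissible ::
  "'v set \<Rightarrow> ('v \<times> 'v) set \<Rightarrow> ('v \<times> 'v) set \<Rightarrow> ('v \<times> 'v) set \<Rightarrow> ('v \<times> 'v) set
   \<Rightarrow> 'v \<Rightarrow> nat \<Rightarrow> 'v \<Rightarrow> bool" where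
  "admissible V E1 E2 M1 M2 u l v \<longleftrightarrow> u \<in> V \<and> v \<in> V \<and>
     (\<exists>p. alt_path (lay l E1 E2) (lay l M1 M2) p (Minus u) (Minus v)) \<and>
     ((l = 1 \<and> u \<in> Dset V M1 \<and> v \<notin> Dset V M1) \<or>
      (l = 2 \<and> u \<notin> Dset V M2 \<and> v \<in> Dset V M2))"

text \<open>A CLAP given by its node list vs = [v_0,...,v_k] and layer list
  ls = [l_1,...,l_k] (segment i goes from vs!i to vs!(i+1) in layer ls!i).\<close>
definition is_CLAP ::
  "'v set \<Rightarrow> ('v \<times> 'v) set \<Rightarrow> ('v \<times> 'v) set \<Rightarrow> ('v \<times> 'v) set \<Rightarrow> ('v \<times> 'v) set
   \<Rightarrow> 'v list \<Rightarrow> nat list \<Rightarrow> bool" where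
  "is_CLAP V E1 E2 M1 M2 vs ls \<longleftrightarrow>
     length vs = Suc (length ls) \<and>
     hd vs \<in> Dset V M1 - Dset V M2 \<and>
     last vs \<in> Dset V M2 - Dset V M1 \<and>
     distinct vs \<and>
     (\<forall>i. Suc i < length ls \<longrightarrow> ls ! Suc i \<noteq> ls ! i) \<and>
     (\<forall>i < length ls. admissible V E1 E2 M1 M2 (vs ! i) (ls ! i) (vs ! Suc i))"

definition is_shortest_CLAP ::
  "'v set \<Rightarrow> ('v \<times> 'v) set \<Rightarrow> ('v \<times> 'v) set \<Rightarrow> ('v \<times> 'v) set \<Rightarrow> ('v \<times> 'v) set
   \<Rightarrow> 'v list \<Rightarrow> nat list \<Rightarrow> bool" where
  "is_shortest_CLAP V E1 E2 M1 M2 vs ls \<longleftrightarrow>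
     is_CLAP V E1 E2 M1 M2 vs ls \<and>
     (\<forall>vs' ls'. is_CLAP V E1 E2 M1 M2 vs' ls' \<longrightarrow> length ls \<le> length ls')"

end

theory Submission
  imports Defs
begin


fun is_minus :: "'v side \<Rightarrow> bool" where
  "is_minus (Minus _) = True" | "is_minus (Plus _) = False"

lemma badj_side: "badj E x y \<Longrightarrow> is_minus x \<longleftrightarrow> \<not> is_minus y"
  unfolding badj_def by auto

lemma badj_minus: "badj E (Minus u) y \<Longrightarrow> \<exists>a. y = Plus a \<and> bedge (Minus u) y = (a, u)"
  unfolding badj_def by auto

lemma badj_minus2: "badj E y (Minus u) \<Longrightarrow> \<exists>a. y = Plus a \<and> bedge y (Minus u) = (a, u)"
  unfolding badj_def by auto

lemma length_path_edges: "length (path_edges p) = length p - 1"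
  unfolding path_edges_def by simp

lemma nth_path_edges: "Suc n < length p \<Longrightarrow> path_edges p ! n = bedge (p!n) (p!Suc n)"
  unfolding path_edges_def by (simp add: nth_tl)

definition good :: "('v \<times> 'v) set \<Rightarrow> ('v \<times> 'v) set \<Rightarrow> bool \<Rightarrow> 'v side list \<Rightarrow> bool" where
  "good E M c p \<longleftrightarrow> p \<noteq> [] \<and> distinct p
     \<and> (\<forall>i. Suc i < length p \<longrightarrow> badj E (p ! i) (p ! Suc i))
     \<and> (\<forall>n < length p. is_minus (p!n) \<longleftrightarrow> even n)
     \<and> (\<forall>n. Suc n < length p \<longrightarrow> (bedge (p!n) (p!Suc n) \<in> M \<longleftrightarrow> (odd n \<longleftrightarrow> c)))"

lemma sides:
  assumes "p \<noteq> []" "hd p = Minus u" "\<forall>i. Suc i < length p \<longrightarrow> badj E (p ! i) (p ! Suc i)"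
  shows "n < length p \<Longrightarrow> is_minus (p!n) \<longleftrightarrow> even n"
proof (induction n)
  case 0
  then show ?case using assms by (simp add: hd_conv_nth[symmetric])
next
  case (Suc n)
  then show ?case using assms(3) badj_side by fastforce
qed

lemma good_alt: "good E M c p \<Longrightarrow> alt_path E M p (hd p) (last p)"
  unfolding good_def alt_path_def
  by (auto simp: length_path_edges nth_path_edges)

lemma alt_good1:
  assumes "alt_path E M p (Minus u) (Minus v)" "\<forall>w. (w, u) \<notin> M"
  shows "good E M True p"
proof -
  have ne: "p \<noteq> []" and h: "hd p = Minus u" and adj: "\<forall>i. Suc i < length p \<longrightarrow> badj E (p ! i) (p ! Suc i)"
    and alt: "\<forall>i. Suc i < length (path_edges p) \<longrightarrow>
            ((path_edges p ! i \<in> M) \<noteq> (path_edges p ! Suc i \<in> M))"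
    using assms(1) unfolding alt_path_def by auto
  have "Suc n < length p \<Longrightarrow> (bedge (p!n) (p!Suc n) \<in> M \<longleftrightarrow> odd n)" for n
  proof (induction n)
    case 0
    have "p!0 = Minus u" using ne h by (simp add: hd_conv_nth[symmetric])
    then obtain a where "bedge (p!0) (p!1) = (a,u)" using adj 0 badj_minus by fastforce
    then show ?case using assms(2) by simp
  next
    case (Suc n)
    then show ?case using alt[rule_format, of n] by (simp add: length_path_edges nth_path_edges)
  qed
  then show ?thesis using ne adj sides[OF ne h adj] assms(1) unfolding good_def alt_path_def by auto
qed

lemma alt_good2:
  assumes "alt_path E M p (Minus u) (Minus v)" "\<forall>w. (w, v) \<notin> M"
  shows "good E M False p"
proof -
  have ne: "p \<noteq> []" and h: "hd p = Minus u" and l: "last p = Minus v"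
    and adj: "\<forall>i. Suc i < length p \<longrightarrow> badj E (p ! i) (p ! Suc i)"
    and alt: "\<forall>i. Suc i < length (path_edges p) \<longrightarrow>
            ((path_edges p ! i \<in> M) \<noteq> (path_edges p ! Suc i \<in> M))"
    using assms(1) unfolding alt_path_def by auto
  have sd: "n < length p \<Longrightarrow> is_minus (p!n) \<longleftrightarrow> even n" for n using sides[OF ne h adj] .
  have "bedge (p!n) (p!Suc n) \<in> M \<longleftrightarrow> even n" if n: "Suc n < length p" for n
  proof -
    define L where "L = length p - 2"
    have lp: "p ! (length p - 1) = Minus v" using ne l by (simp add: last_conv_nth)
    have "is_minus (p ! (length p - 1))" using lp by simp
    then have "even (length p - 1)" using sd[of "length p - 1"] ne by simp
    moreover have "L + 1 = length p - 1" using n unfolding L_def by simp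
    ultimately have evL: "even (L + 1)" by simp
    have LS: "Suc L = length p - 1" using n unfolding L_def by simp
    have base: "bedge (p!L) (p!Suc L) \<notin> M"
    proof -
      have "Suc L < length p" using LS n by simp
      then have "badj E (p!L) (p!Suc L)" using adj by blast
      then obtain a where "bedge (p!L) (p!Suc L) = (a, v)" using badj_minus2 lp LS by metis
      then show ?thesis using assms(2) by simp
    qed
    have "d \<le> L \<Longrightarrow> (bedge (p!(L-d)) (p!Suc (L-d)) \<in> M \<longleftrightarrow> even (L-d))" for d
    proof (induction d)
      case 0
      then show ?case using base evL by simp
    next
      case (Suc d)
      have Lp: "Suc (Suc L) = length p" using n unfolding L_def by simp
      have q: "Suc (L - Suc d) = L - d" using Suc.prems by simp
      have "Suc (L - Suc d) < length (path_edges p)" using Suc.prems Lp by (simp add: length_path_edges)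
      then have "(path_edges p ! (L - Suc d) \<in> M) \<noteq> (path_edges p ! Suc (L - Suc d) \<in> M)" using alt by blast
      moreover have "path_edges p ! (L - Suc d) = bedge (p!(L - Suc d)) (p!Suc (L - Suc d))"
        using Suc.prems Lp by (intro nth_path_edges) simp
      moreover have "path_edges p ! Suc (L - Suc d) = bedge (p!(L - d)) (p!Suc (L - d))"
        using Suc.prems Lp q by (simp add: nth_path_edges)
      moreover have "even (L - Suc d) \<longleftrightarrow> \<not> even (L - d)" using Suc.prems q by (metis even_Suc)
      ultimately show ?case using Suc.IH Suc.prems by (simp add: q)
    qed
    moreover have "L - (L - n) = n" "L - n \<le> L" using n unfolding L_def by auto
    ultimately show ?thesis by metis
  qed
  then show ?thesis using ne adj sd assms(1) unfolding good_def alt_path_def by auto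
qed



lemma splice:
  assumes gP: "good E M c P" and gQ: "good E M c Q" and x: "x \<in> set P" "x \<in> set Q"
  shows "\<exists>r. good E M c r \<and> hd r = hd P \<and> last r = last Q"
proof -
  define a where "a = (LEAST a. a < length P \<and> P!a \<in> set Q)"
  have ex: "\<exists>a. a < length P \<and> P!a \<in> set Q" using x by (metis in_set_conv_nth)
  have a: "a < length P" "P!a \<in> set Q" using LeastI_ex[OF ex] unfolding a_def by auto
  have amin: "P!m \<notin> set Q" if "m < a" for m
  proof
    assume "P!m \<in> set Q"
    then have "a \<le> m" unfolding a_def using that a(1) by (intro Least_le) simp
    then show False using that by simp
  qed
  obtain b where b: "b < length Q" "Q!b = P!a" using a(2) by (metis in_set_conv_nth)
  have sP: "\<And>n. n < length P \<Longrightarrow> is_minus (P!n) \<longleftrightarrow> even n" using gP unfolding good_def by blast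
  have sQ: "\<And>n. n < length Q \<Longrightarrow> is_minus (Q!n) \<longleftrightarrow> even n" using gQ unfolding good_def by blast
  have par: "even a \<longleftrightarrow> even b" using sP[OF a(1)] sQ[OF b(1)] b(2) by simp
  define r where "r = take a P @ drop b Q"
  have lr: "length r = a + (length Q - b)" using a b by (simp add: r_def)
  have rn: "r!n = (if n < a then P!n else Q!(n - a + b))" if "n < length r" for n
    using a b that lr by (auto simp: r_def nth_append intro!: arg_cong[where f="(!) Q"])
  have step: "(r!i = P!i \<and> r!Suc i = P!Suc i \<and> Suc i < length P) \<or>
     (r!i = Q!(i-a+b) \<and> r!Suc i = Q!Suc (i-a+b) \<and> Suc (i-a+b) < length Q \<and> (even (i-a+b) \<longleftrightarrow> even i))"
    if "Suc i < length r" for i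
  proof (cases "Suc i < a")
    case True
    then show ?thesis using rn[of i] rn[of "Suc i"] that a by simp
  next
    case False
    show ?thesis
    proof (cases "Suc i = a")
      case True
      then show ?thesis using rn[of i] rn[of "Suc i"] that a b by simp
    next
      case False
      then have "a \<le> i" using \<open>\<not> Suc i < a\<close> by simp
      have e1: "Suc (i - a + b) = Suc i - a + b" using \<open>a \<le> i\<close> by simp
      have "r!i = Q!(i-a+b)" using rn[of i] that \<open>a \<le> i\<close> by simp
      moreover have "r!Suc i = Q!Suc (i-a+b)" using rn[of "Suc i"] that \<open>a \<le> i\<close> e1 by simp
      moreover have "Suc (i-a+b) < length Q" using that lr \<open>a \<le> i\<close> by simp
      moreover have "even (i-a+b) \<longleftrightarrow> even i" using par \<open>a \<le> i\<close> by auto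
      ultimately show ?thesis by blast
    qed
  qed
  have ne: "r \<noteq> []" using lr b by auto
  have dist: "distinct r"
  proof -
    have "distinct (take a P)" "distinct (drop b Q)" using gP gQ unfolding good_def by auto
    moreover have "set (take a P) \<inter> set (drop b Q) = {}"
    proof -
      have "y \<notin> set Q" if "y \<in> set (take a P)" for y
        using that amin a(1) by (auto simp: in_set_conv_nth)
      then show ?thesis using set_drop_subset[of b Q] by blast
    qed
    ultimately show ?thesis unfolding r_def by simp
  qed
  have adj: "\<forall>i. Suc i < length r \<longrightarrow> badj E (r ! i) (r ! Suc i)"
  proof (intro allI impI)
    fix i assume "Suc i < length r"
    from step[OF this] show "badj E (r ! i) (r ! Suc i)" using gP gQ unfolding good_def by metis
  qed
  have edg: "\<forall>n. Suc n < length r \<longrightarrow> (bedge (r!n) (r!Suc n) \<in> M \<longleftrightarrow> (odd n \<longleftrightarrow> c))"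
  proof (intro allI impI)
    fix i assume "Suc i < length r"
    from step[OF this] show "bedge (r!i) (r!Suc i) \<in> M \<longleftrightarrow> (odd i \<longleftrightarrow> c)" using gP gQ unfolding good_def by metis
  qed
  have sides: "\<forall>n < length r. is_minus (r!n) \<longleftrightarrow> even n"
  proof (intro allI impI)
    fix n assume n: "n < length r"
    show "is_minus (r!n) \<longleftrightarrow> even n"
    proof (cases "n < a")
      case True
      then show ?thesis using rn[OF n] sP a by simp
    next
      case False
      then have "n - a + b < length Q" using n lr by simp
      moreover have "even (n - a + b) \<longleftrightarrow> even n" using False par by auto
      ultimately show ?thesis using rn[OF n] sQ False by simp
    qed
  qed
  have "good E M c r" unfolding good_def using ne dist adj edg sides by blast
  moreover have "hd r = hd P"
  proof -
    have "hd r = r!0" using ne by (simp add: hd_conv_nth)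
    also have "\<dots> = P!0" using rn[of 0] ne b a by (cases "a = 0") auto
    finally show ?thesis using gP unfolding good_def by (simp add: hd_conv_nth)
  qed
  moreover have "last r = last Q" unfolding r_def using b by simp
  ultimately show ?thesis by blast
qed



lemma merge:
  assumes P: "alt_path E M P (Minus a) (Minus b)" and Q: "alt_path E M Q (Minus c) (Minus d)"
    and u: "((\<forall>w. (w,a)\<notin>M) \<and> (\<forall>w. (w,c)\<notin>M)) \<or> ((\<forall>w. (w,b)\<notin>M) \<and> (\<forall>w. (w,d)\<notin>M))"
    and i: "set P \<inter> set Q \<noteq> {}"
  shows "\<exists>r. alt_path E M r (Minus a) (Minus d)"
proof -
  obtain x where x: "x \<in> set P" "x \<in> set Q" using i by blast
  have hl: "hd P = Minus a" "last Q = Minus d" using P Q unfolding alt_path_def by auto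
  from u obtain cc where "good E M cc P" "good E M cc Q"
    using alt_good1[OF P] alt_good1[OF Q] alt_good2[OF P] alt_good2[OF Q] by blast
  from splice[OF this x] obtain r where "good E M cc r" "hd r = hd P" "last r = last Q" by blast
  then show ?thesis using good_alt hl by metis
qed

lemma edge_plus:
  assumes "e \<in> set (path_edges p)" "\<forall>i. Suc i < length p \<longrightarrow> badj E (p ! i) (p ! Suc i)"
  shows "Plus (fst e) \<in> set p"
proof -
  obtain n where n: "n < length (path_edges p)" "e = path_edges p ! n" using assms(1) by (metis in_set_conv_nth)
  then have n1: "Suc n < length p" by (simp add: length_path_edges)
  then have e: "e = bedge (p!n) (p!Suc n)" using n nth_path_edges by metis
  have "badj E (p!n) (p!Suc n)" using assms(2) n1 by blast
  then obtain a b where "(p!n = Plus a \<and> p!Suc n = Minus b) \<or> (p!n = Minus b \<and> p!Suc n = Plus a)"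
    unfolding badj_def by blast
  then show ?thesis using e n1 by (metis Suc_lessD bedge.simps(1) bedge.simps(2) fst_conv nth_mem)
qed

lemma shortcut:
  assumes C: "is_CLAP V E1 E2 M1 M2 vs ls" and ij: "i < j" "j < length ls" and l: "ls!i = ls!j"
    and r: "alt_path (lay (ls!i) E1 E2) (lay (ls!i) M1 M2) r (Minus (vs!i)) (Minus (vs!Suc j))"
  shows "is_CLAP V E1 E2 M1 M2 (take (Suc i) vs @ drop (Suc j) vs) (take i ls @ drop j ls)"
proof -
  define vs' where "vs' = take (Suc i) vs @ drop (Suc j) vs"
  define ls' where "ls' = take i ls @ drop j ls"
  have len: "length vs = Suc (length ls)" and hd: "hd vs \<in> Dset V M1 - Dset V M2"
    and la: "last vs \<in> Dset V M2 - Dset V M1" and dis: "distinct vs"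
    and alt: "\<forall>i. Suc i < length ls \<longrightarrow> ls ! Suc i \<noteq> ls ! i"
    and adm: "\<forall>i < length ls. admissible V E1 E2 M1 M2 (vs ! i) (ls ! i) (vs ! Suc i)"
    using C unfolding is_CLAP_def by auto
  have lls': "length ls' = i + (length ls - j)" using ij unfolding ls'_def by simp
  have lvs': "length vs' = Suc (length ls')" using ij len unfolding vs'_def lls' by simp
  have vn: "vs'!m = (if m \<le> i then vs!m else vs!(m - i + j))" if "m < length vs'" for m
    using that ij len lvs' lls' by (auto simp: vs'_def nth_append intro!: arg_cong[where f="(!) vs"])
  have ln: "ls'!m = (if m < i then ls!m else ls!(m - i + j))" if "m < length ls'" for m
    using that ij lls' by (auto simp: ls'_def nth_append intro!: arg_cong[where f="(!) ls"])
  have "hd vs' = hd vs" unfolding vs'_def using len ij by (simp add: hd_append)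
  moreover have "last vs' = last vs" unfolding vs'_def using len ij by simp
  moreover have "distinct vs'"
  proof -
    have "set (take (Suc i) vs) \<inter> set (drop (Suc j) vs) = {}"
      using dis ij by (intro set_take_disj_set_drop_if_distinct) auto
    then show ?thesis unfolding vs'_def using dis by simp
  qed
  moreover have "\<forall>m. Suc m < length ls' \<longrightarrow> ls' ! Suc m \<noteq> ls' ! m"
  proof (intro allI impI)
    fix m assume m: "Suc m < length ls'"
    consider "Suc m < i" | "Suc m = i" | "i \<le> m" by linarith
    then show "ls' ! Suc m \<noteq> ls' ! m"
    proof cases
      case 1 then show ?thesis using ln[of m] ln[of "Suc m"] m alt ij by simp
    next
      case 2 then show ?thesis using ln[of m] ln[of "Suc m"] m alt ij l by auto
    next
      case 3
      have "Suc (m - i + j) < length ls" using m lls' 3 by simp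
      moreover have "Suc m - i + j = Suc (m - i + j)" using 3 by simp
      ultimately show ?thesis using ln[of m] ln[of "Suc m"] m alt 3 by simp
    qed
  qed
  moreover have "\<forall>m < length ls'. admissible V E1 E2 M1 M2 (vs' ! m) (ls' ! m) (vs' ! Suc m)"
  proof (intro allI impI)
    fix m assume m: "m < length ls'"
    consider "m < i" | "m = i" | "i < m" by linarith
    then show "admissible V E1 E2 M1 M2 (vs' ! m) (ls' ! m) (vs' ! Suc m)"
    proof cases
      case 1 then show ?thesis using ln[of m] vn[of m] vn[of "Suc m"] m lvs' adm ij by simp
    next
      case 2
      have ai: "admissible V E1 E2 M1 M2 (vs ! i) (ls ! i) (vs ! Suc i)" using adm ij by simp
      have aj: "admissible V E1 E2 M1 M2 (vs ! j) (ls ! j) (vs ! Suc j)" using adm ij by simp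
      have "admissible V E1 E2 M1 M2 (vs ! i) (ls ! i) (vs ! Suc j)"
        using ai aj l r unfolding admissible_def by auto
      then show ?thesis using 2 ln[of m] vn[of m] vn[of "Suc m"] m lvs' ij l by simp
    next
      case 3
      have "m - i + j < length ls" using m lls' 3 by simp
      moreover have "Suc m - i + j = Suc (m - i + j)" using 3 by simp
      ultimately show ?thesis using ln[of m] vn[of m] vn[of "Suc m"] m lvs' adm 3 by simp
    qed
  qed
  ultimately show ?thesis using lvs' hd la unfolding is_CLAP_def vs'_def[symmetric] ls'_def[symmetric] by simp
qed



theorem mainTheorem5:
  fixes V :: "'v set" and E1 E2 M1 M2 :: "('v \<times> 'v) set"
    and vs :: "'v list" and ls :: "nat list"
  assumes "finite V"
    and "E1 \<subseteq> V \<times> V" and "E2 \<subseteq> V \<times> V"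
    and "is_matching E1 M1" and "is_matching E2 M2"
    and "is_shortest_CLAP V E1 E2 M1 M2 vs ls"
  shows "\<exists>ps :: 'v side list list. length ps = length ls \<and>
           (\<forall>i < length ls. alt_path (lay (ls ! i) E1 E2) (lay (ls ! i) M1 M2) (ps ! i)
                               (Minus (vs ! i)) (Minus (vs ! Suc i))) \<and>
           (\<forall>i < length ls. \<forall>j < length ls. i \<noteq> j \<longrightarrow> ls ! i = ls ! j \<longrightarrow>
               set (path_edges (ps ! i)) \<inter> set (path_edges (ps ! j)) = {})"
proof -
  have C: "is_CLAP V E1 E2 M1 M2 vs ls"
    and short: "\<And>vs' ls'. is_CLAP V E1 E2 M1 M2 vs' ls' \<Longrightarrow> length ls \<le> length ls'"
    using assms(6) unfolding is_shortest_CLAP_def by auto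
  have adm: "\<And>i. i < length ls \<Longrightarrow> admissible V E1 E2 M1 M2 (vs ! i) (ls ! i) (vs ! Suc i)"
    using C unfolding is_CLAP_def by auto
  define W where "W i = (SOME p. alt_path (lay (ls!i) E1 E2) (lay (ls!i) M1 M2) p (Minus (vs!i)) (Minus (vs!Suc i)))" for i
  define ps where "ps = map W [0..<length ls]"
  have wit: "alt_path (lay (ls!i) E1 E2) (lay (ls!i) M1 M2) (W i) (Minus (vs!i)) (Minus (vs!Suc i))"
    if "i < length ls" for i
  proof -
    have "\<exists>p. alt_path (lay (ls!i) E1 E2) (lay (ls!i) M1 M2) p (Minus (vs!i)) (Minus (vs!Suc i))"
      using adm[OF that] unfolding admissible_def by blast
    then show ?thesis unfolding W_def by (rule someI_ex)
  qed
  have disj: "set (W i) \<inter> set (W j) = {}" if ij: "i < j" "j < length ls" and l: "ls!i = ls!j" for i j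
  proof (rule ccontr)
    assume ne: "set (W i) \<inter> set (W j) \<noteq> {}"
    have ai: "admissible V E1 E2 M1 M2 (vs ! i) (ls ! i) (vs ! Suc i)" using adm ij by simp
    have aj: "admissible V E1 E2 M1 M2 (vs ! j) (ls ! j) (vs ! Suc j)" using adm ij by simp
    let ?M = "lay (ls!i) M1 M2"
    have u: "((\<forall>w. (w,vs!i)\<notin>?M) \<and> (\<forall>w. (w,vs!j)\<notin>?M)) \<or> ((\<forall>w. (w,vs!Suc i)\<notin>?M) \<and> (\<forall>w. (w,vs!Suc j)\<notin>?M))"
      using ai aj l unfolding admissible_def Dset_def lay_def by auto
    have wj: "alt_path (lay (ls!i) E1 E2) ?M (W j) (Minus (vs!j)) (Minus (vs!Suc j))"
      using wit[of j] ij l by simp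
    obtain r where "alt_path (lay (ls!i) E1 E2) ?M r (Minus (vs!i)) (Minus (vs!Suc j))"
      using merge[OF wit[of i] wj u ne] ij by auto
    from shortcut[OF C ij l this] have "length ls \<le> length (take i ls @ drop j ls)" by (rule short)
    then show False using ij by simp
  qed
  have adjW: "\<forall>k. Suc k < length (W i) \<longrightarrow> badj (lay (ls!i) E1 E2) (W i ! k) (W i ! Suc k)"
    if "i < length ls" for i using wit[OF that] unfolding alt_path_def by blast
  have edisj: "set (path_edges (W i)) \<inter> set (path_edges (W j)) = {}"
    if ij: "i < length ls" "j < length ls" "i \<noteq> j" "ls!i = ls!j" for i j
  proof -
    have "set (W i) \<inter> set (W j) = {}"
      using disj[of i j] disj[of j i] ij by (cases "i < j") auto
    then show ?thesis using edge_plus[OF _ adjW[OF ij(1)]] edge_plus[OF _ adjW[OF ij(2)]] by blast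
  qed
  show ?thesis
    by (rule exI[of _ ps]) (simp add: ps_def wit edisj)
qed


end
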